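(* Let $n \ge 1$ and $K \ge 1$ be integers and let $M_0, M_1, \dots, M_{K-1}$ be $n \times n$ real matrices with nonnegative entries. For real $\tau > 0$ define $$M(\tau) = (M_0 + \tau I)(M_1 + \tau I)\cdots(M_{K-1} + \tau I),$$ where $I$ is the $n\times n$ identity matrix, and assume that $M(\tau)$ is irreducible and aperiodic (primitive) for every $\tau > 0$. For $\tau>0$ let $v(\tau) \in [0,1]^n$ denote the principal (Perron) eigenvector of $M(\tau)$, i.e. the unique eigenvector of $M(\tau)$ for its spectral radius whose entries are nonnegative and sum to $1$. Then the map $(0,\infty) \ni \tau \mapsto v(\tau) \in [0,1]^n$ (which is real-analytic) extends continuously to $\tau = 0$; that is, the limit $\lim_{\tau \to 0^+} v(\tau)$ exists.
   Context: An $n\times n$ nonnegative matrix is irreducible if its associated directed graph (edge $i\to j$ iff entry $(i,j)>0$) is strongly connected, and aperiodic if in addition the gcd of the lengths of its cycles is $1$. By Perron–Frobenius theory such a matrix has a simple positive real eigenvalue equal to its spectral radius, with an eigenvector having positive entries, unique up to scaling. Note that the unperturbed product $M_0M_1\cdots M_{K-1}$ itself need not be irreducible or aperiodic (it may even be the zero matrix). *)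

theory Defs
  imports "HOL-Analysis.Analysis"
begin

definition nonneg_mat :: "real^'n^'n \<Rightarrow> bool" where
  "nonneg_mat A \<longleftrightarrow> (\<forall>i j. A $ i $ j \<ge> 0)"

definition mat_graph :: "real^'n^'n \<Rightarrow> ('n \<times> 'n) set" where
  "mat_graph A = {(i, j). A $ i $ j > 0}"

definition irreducible_mat :: "real^'n^'n \<Rightarrow> bool" where
  "irreducible_mat A \<longleftrightarrow> nonneg_mat A \<and> (\<forall>i j. (i, j) \<in> (mat_graph A)\<^sup>*)"

definition cycle_lengths :: "real^'n^'n \<Rightarrow> nat set" where
  "cycle_lengths A = {k. k > 0 \<and> (\<exists>i. (i, i) \<in> mat_graph A ^^ k)}"

definition aperiodic_mat :: "real^'n^'n \<Rightarrow> bool" where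
  "aperiodic_mat A \<longleftrightarrow> irreducible_mat A \<and> Gcd (cycle_lengths A) = 1"

definition cmat :: "real^'n^'n \<Rightarrow> complex^'n^'n" where
  "cmat A = (\<chi> i j. complex_of_real (A $ i $ j))"

definition eigenvalues_mat :: "real^'n^'n \<Rightarrow> complex set" where
  "eigenvalues_mat A = {c. \<exists>x::complex^'n. x \<noteq> 0 \<and> cmat A *v x = c *s x}"

definition spectral_radius_mat :: "real^'n^'n \<Rightarrow> real" where
  "spectral_radius_mat A = Max (cmod ` eigenvalues_mat A)"

definition perron_vec :: "real^'n^'n \<Rightarrow> real^'n" where
  "perron_vec A = (THE v. (\<forall>i. v $ i \<ge> 0) \<and> (\<Sum>i\<in>UNIV. v $ i) = 1 \<and>
                      A *v v = spectral_radius_mat A *\<^sub>R v)"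

definition shifted_prod :: "(nat \<Rightarrow> real^'n^'n) \<Rightarrow> nat \<Rightarrow> real \<Rightarrow> real^'n^'n" where
  "shifted_prod M K \<tau> = foldr (\<lambda>k P. (M k + \<tau> *\<^sub>R mat 1) ** P) [0..<K] (mat 1)"

end

theory Submission
  imports Defs "HOL-Computational_Algebra.Polynomial_Factorial" "HOL-Computational_Algebra.Field_as_Ring"
begin


lemma hom_sum_gen:
  fixes h :: "'a::comm_ring_1 \<Rightarrow> 'b::comm_ring_1"
  assumes add: "\<And>x y. h (x+y) = h x + h y" and z: "h 0 = 0"
  shows "h (sum f S) = sum (\<lambda>x. h (f x)) S"
  by (induction S rule: infinite_finite_induct) (simp_all add: add z)

lemma hom_prod_gen:
  fixes h :: "'a::comm_ring_1 \<Rightarrow> 'b::comm_ring_1"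
  assumes mul: "\<And>x y. h (x*y) = h x * h y" and o: "h 1 = 1"
  shows "h (prod f S) = prod (\<lambda>x. h (f x)) S"
  by (induction S rule: infinite_finite_induct) (simp_all add: mul o)

lemma det_map_hom:
  fixes h :: "'a::comm_ring_1 \<Rightarrow> 'b::comm_ring_1" and X :: "'a^'n^'n"
  assumes add: "\<And>x y. h (x+y) = h x + h y" and mul: "\<And>x y. h (x*y) = h x * h y"
    and o: "h 1 = 1" and z: "h 0 = 0"
  shows "det (\<chi> i j. h (X$i$j)) = h (det X)"
proof -
  have m1: "h (-1) = -1"
  proof -
    have "h (-1) + h 1 = 0" using add[of "-1" 1] z by simp
    thus ?thesis using o by (simp add: eq_neg_iff_add_eq_0)
  qed
  have s: "h (of_int (sign p) * y) = of_int (sign p) * h y" for p y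
    by (cases "sign p = 1") (auto simp: sign_def mul m1 o)
  show ?thesis
    unfolding det_def
    by (simp add: hom_sum_gen[of h, OF add z] s hom_prod_gen[of h, OF mul o])
qed

lemma det_kernel_zero:
  fixes X :: "'a::field^'n^'n"
  assumes "X *v x = 0" "x \<noteq> 0"
  shows "det X = 0"
proof (rule ccontr)
  assume "det X \<noteq> 0"
  hence "inj ((*v) X)"
    using det_nz_iff_inj_gen[of "(*v) X"] by simp
  moreover have "X *v 0 = 0" by simp
  ultimately show False using assms by (metis injD)
qed

lemma det_zero_kernel:
  fixes X :: "'a::field^'n^'n"
  assumes "det X = 0"
  shows "\<exists>x. x \<noteq> 0 \<and> X *v x = 0"
proof -
  have "\<not> inj ((*v) X)"
    using det_nz_iff_inj_gen[of "(*v) X"] assms by simp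
  then obtain a b where "a \<noteq> b" "X *v a = X *v b" unfolding inj_def by blast
  thus ?thesis by (intro exI[of _ "a - b"]) (simp add: matrix_vector_mult_diff_distrib)
qed


definition psimplex :: "(real^'n) set" where
  "psimplex = {x. (\<forall>i. 0 \<le> x$i) \<and> sum (\<lambda>i. x$i) UNIV = 1}"

lemma mvc: "(A *v x) $ i = (\<Sum>j\<in>UNIV. A$i$j * x$j)"
  by (simp add: matrix_vector_mult_def)

lemma compact_psimplex: "compact (psimplex :: (real^'n) set)"
unfolding compact_eq_bounded_closed proof
  show "bounded (psimplex :: (real^'n) set)"
  proof (rule boundedI)
    fix x :: "real^'n" assume "x \<in> psimplex"
    hence "sum (\<lambda>i. \<bar>x$i\<bar>) UNIV = sum (\<lambda>i. x$i) UNIV" "sum (\<lambda>i. x$i) UNIV = 1"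
      by (auto simp: psimplex_def intro!: sum.cong)
    thus "norm x \<le> 1" using norm_le_l1_cart[of x] by simp
  qed
  have "psimplex = (\<Inter>i. {x::real^'n. 0 \<le> x$i}) \<inter> {x. sum (\<lambda>i. x$i) UNIV = 1}"
    by (auto simp: psimplex_def)
  also have "closed \<dots>"
    by (intro closed_Int closed_INT closed_Collect_eq continuous_intros ballI
          closed_Collect_le[OF continuous_on_const continuous_on_component[OF continuous_on_id]])
  finally show "closed (psimplex :: (real^'n) set)" .
qed

lemma convex_simplex: "convex (psimplex :: (real^'n) set)"
proof (rule convexI)
  fix x y :: "real^'n" and u v :: real
  assume x: "x \<in> psimplex" and y: "y \<in> psimplex" and u: "0 \<le> u" and v: "0 \<le> v" and uv: "u + v = 1"
  have "sum (\<lambda>i. (u *\<^sub>R x + v *\<^sub>R y)$i) UNIV = u * sum (\<lambda>i. x$i) UNIV + v * sum (\<lambda>i. y$i) UNIV"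
    by (simp add: sum.distrib sum_distrib_left)
  also have "\<dots> = 1" using x y uv by (simp add: psimplex_def)
  finally show "u *\<^sub>R x + v *\<^sub>R y \<in> psimplex"
    using x y u v by (simp add: psimplex_def)
qed

lemma simplex_ne: "(\<chi> i. 1 / real CARD('n)) \<in> (psimplex :: (real^'n) set)"
proof -
  have "sum (\<lambda>i::'n. 1 / real CARD('n)) UNIV = 1" by simp
  thus ?thesis by (simp add: psimplex_def)
qed

lemma simplex_pos_entry:
  assumes x: "x \<in> psimplex" shows "\<exists>k. x$k > 0"
proof (rule ccontr)
  assume "\<not> (\<exists>k. x$k > 0)"
  hence le: "x$k \<le> 0" for k by (simp add: not_less)
  have ge: "x$k \<ge> 0" for k using x by (simp add: psimplex_def)
  have z: "x$k = 0" for k using le[of k] ge[of k] by linarith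
  have "sum (\<lambda>k. x$k) UNIV = 0" by (simp add: z)
  thus False using x by (simp add: psimplex_def)
qed

locale pf =
  fixes A :: "real^'n^'n"
  assumes nn: "\<And>i j. A$i$j \<ge> 0"
    and irr: "\<And>i j. (i,j) \<in> (mat_graph A)\<^sup>*"
    and diag: "\<And>i. A$i$i > 0"
begin

lemma Av_nonneg: "(\<And>j. y$j \<ge> 0) \<Longrightarrow> (A *v y)$i \<ge> 0"
  by (simp add: mvc nn sum_nonneg)

lemma Av_ge: "(\<And>j. y$j \<ge> 0) \<Longrightarrow> (A *v y)$i \<ge> A$i$k * y$k"
  unfolding mvc by (rule member_le_sum[where f="\<lambda>j. A$i$j * y$j"]) (auto simp: nn)

lemma propagate:
  assumes nonneg: "\<And>j. y$j \<ge> 0" and eig: "A *v y = \<mu> *\<^sub>R y" and pos: "y$j > 0"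
  shows "y$i > 0"
proof -
  have "(i,j) \<in> (mat_graph A)\<^sup>*" by (rule irr)
  thus ?thesis
  proof (induction rule: converse_rtrancl_induct)
    case base thus ?case using pos .
  next
    case (step i k)
    hence "A$i$k > 0" by (simp add: mat_graph_def)
    have "(A *v y)$i \<ge> A$i$k * y$k" by (rule Av_ge[OF nonneg])
    moreover have "A$i$k * y$k > 0" using \<open>A$i$k > 0\<close> step.IH by simp
    ultimately have "(A *v y)$i > 0" by linarith
    hence "\<mu> * y$i > 0" using eig by simp
    thus ?case using nonneg[of i] by (cases "y$i = 0") auto
  qed
qed

lemma exists_pos_eigvec:
  "\<exists>v l. (\<forall>i. v$i > 0) \<and> sum (\<lambda>i. v$i) UNIV = 1 \<and> A *v v = l *\<^sub>R v \<and> l > 0"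
proof -
  define s where "s x = sum (\<lambda>i. (A *v x)$i) UNIV" for x
  have spos: "s x > 0" if xs: "x \<in> psimplex" for x
  proof -
    obtain k where k: "x$k > 0" using simplex_pos_entry[OF xs] by blast
    have nn': "\<And>j. x$j \<ge> 0" using xs by (simp add: psimplex_def)
    have "(A *v x)$k \<ge> A$k$k * x$k" by (rule Av_ge[OF nn'])
    moreover have "A$k$k * x$k > 0" using diag k by simp
    ultimately have "(A *v x)$k > 0" by linarith
    moreover have "(A *v x)$k \<le> s x" unfolding s_def
      by (rule member_le_sum) (auto intro: Av_nonneg[OF nn'])
    ultimately show ?thesis by linarith
  qed
  define f where "f x = inverse (s x) *\<^sub>R (A *v x)" for x
  have cont: "continuous_on psimplex f"
  proof -
    have "continuous_on psimplex s" unfolding s_def by (intro continuous_intros)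
    hence "continuous_on psimplex (\<lambda>x. inverse (s x))"
      by (rule continuous_on_inverse) (use spos in force)
    thus ?thesis unfolding f_def by (rule continuous_on_scaleR) (intro continuous_intros)
  qed
  have fim: "f \<in> psimplex \<rightarrow> psimplex"
  proof
    fix x :: "real^'n" assume x: "x \<in> psimplex"
    have nn': "\<And>j. x$j \<ge> 0" using x by (simp add: psimplex_def)
    have "sum (\<lambda>i. f x $ i) UNIV = inverse (s x) * s x"
      by (simp add: f_def s_def sum_distrib_left)
    also have "\<dots> = 1" using spos[OF x] by simp
    finally have sum1: "sum (\<lambda>i. f x $ i) UNIV = 1" .
    have "\<forall>i. 0 \<le> f x $ i"
      using spos[OF x] Av_nonneg[OF nn'] by (simp add: f_def)
    thus "f x \<in> psimplex" using sum1 by (simp add: psimplex_def)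
  qed
  have ne: "psimplex \<noteq> {}" using simplex_ne by blast
  obtain x where x: "x \<in> psimplex" "f x = x"
    by (rule brouwer[OF compact_psimplex convex_simplex ne cont fim])
  have nn': "\<And>j. x$j \<ge> 0" using x by (simp add: psimplex_def)
  have eig: "A *v x = s x *\<^sub>R x"
  proof -
    have "s x *\<^sub>R f x = A *v x" using spos[OF x(1)] by (simp add: f_def)
    thus ?thesis using x(2) by simp
  qed
  obtain k where k: "x$k > 0" using simplex_pos_entry[OF x(1)] by blast
  have "\<forall>i. x$i > 0" using propagate[OF nn' eig k] by blast
  moreover have "sum (\<lambda>i. x$i) UNIV = 1" using x(1) by (simp add: psimplex_def)
  ultimately show ?thesis using eig spos[OF x(1)] by blast
qed

end

lemma pf_transpose: "pf A \<Longrightarrow> pf (transpose A)"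
proof -
  assume "pf A"
  then interpret pf A .
  have g: "mat_graph (transpose A) = (mat_graph A)\<inverse>"
    by (auto simp: mat_graph_def transpose_def)
  show ?thesis
  proof
    fix i j
    show "(i,j) \<in> (mat_graph (transpose A))\<^sup>*"
      by (simp only: g rtrancl_converse) (simp add: irr)
  qed (auto simp: transpose_def nn diag)
qed


lemma dot_transpose:
  fixes A :: "real^'n^'n"
  shows "(\<Sum>i\<in>UNIV. w$i * (A *v u)$i) = (\<Sum>j\<in>UNIV. (transpose A *v w)$j * u$j)"
proof -
  have "(\<Sum>i\<in>UNIV. w$i * (A *v u)$i) = (\<Sum>i\<in>UNIV. \<Sum>j\<in>UNIV. w$i * A$i$j * u$j)"
    by (simp add: mvc sum_distrib_left mult_ac)
  also have "\<dots> = (\<Sum>j\<in>UNIV. \<Sum>i\<in>UNIV. w$i * A$i$j * u$j)"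
    by (rule sum.swap)
  also have "\<dots> = (\<Sum>j\<in>UNIV. (transpose A *v w)$j * u$j)"
    by (simp add: mvc transpose_def sum_distrib_left mult_ac)
  finally show ?thesis .
qed

context pf begin

definition vv where "vv = (SOME v. \<exists>l. (\<forall>i. v$i > 0) \<and> sum (\<lambda>i. v$i) UNIV = 1 \<and> A *v v = l *\<^sub>R v \<and> l > 0)"
definition lam where "lam = sum (\<lambda>i. (A *v vv)$i) UNIV"

lemma vv_props: "(\<forall>i. vv$i > 0) \<and> sum (\<lambda>i. vv$i) UNIV = 1 \<and> A *v vv = lam *\<^sub>R vv \<and> lam > 0"
proof -
  have "\<exists>l. (\<forall>i. vv$i > 0) \<and> sum (\<lambda>i. vv$i) UNIV = 1 \<and> A *v vv = l *\<^sub>R vv \<and> l > 0"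
    unfolding vv_def using someI_ex[OF exists_pos_eigvec] .
  then obtain l where l: "\<forall>i. vv$i > 0" "sum (\<lambda>i. vv$i) UNIV = 1" "A *v vv = l *\<^sub>R vv" "l > 0" by blast
  have "lam = l * sum (\<lambda>i. vv$i) UNIV" unfolding lam_def l(3) by (simp add: sum_distrib_left)
  with l show ?thesis by simp
qed

lemma vv_pos: "vv$i > 0" and vv_sum: "sum (\<lambda>i. vv$i) UNIV = 1"
  and vv_eig: "A *v vv = lam *\<^sub>R vv" and lam_pos: "lam > 0"
  using vv_props by auto

lemma left_vec: "\<exists>w. (\<forall>i. w$i > 0) \<and> transpose A *v w = lam *\<^sub>R w"
proof -
  obtain w l where w: "\<forall>i. w$i > 0" "transpose A *v w = l *\<^sub>R w"
    using pf.exists_pos_eigvec[OF pf_transpose[OF pf_axioms]] by blast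
  have "(\<Sum>i\<in>UNIV. w$i * (A *v vv)$i) = (\<Sum>j\<in>UNIV. (transpose A *v w)$j * vv$j)"
    by (rule dot_transpose)
  moreover have "(\<Sum>i\<in>UNIV. w$i * (A *v vv)$i) = lam * (\<Sum>i\<in>UNIV. w$i * vv$i)"
    by (simp add: vv_eig sum_distrib_left mult_ac)
  moreover have "(\<Sum>j\<in>UNIV. (transpose A *v w)$j * vv$j) = l * (\<Sum>i\<in>UNIV. w$i * vv$i)"
    unfolding w(2) by (simp add: sum_distrib_left mult_ac)
  ultimately have "lam * (\<Sum>i\<in>UNIV. w$i * vv$i) = l * (\<Sum>i\<in>UNIV. w$i * vv$i)" by simp
  moreover have "(\<Sum>i\<in>UNIV. w$i * vv$i) > 0"
    by (rule sum_pos) (auto simp: w vv_pos)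
  ultimately have "l = lam" by simp
  with w show ?thesis by blast
qed

definition ww where "ww = (SOME w. (\<forall>i. w$i > 0) \<and> transpose A *v w = lam *\<^sub>R w)"

lemma ww_pos: "ww$i > 0" and ww_eig: "transpose A *v ww = lam *\<^sub>R ww"
  using someI_ex[OF left_vec] unfolding ww_def[symmetric] by auto

lemma eig_nonneg_lam:
  assumes nn: "\<And>j. u$j \<ge> 0" and nz: "u \<noteq> 0" and eig: "A *v u = \<mu> *\<^sub>R u"
  shows "\<mu> = lam"
proof -
  have "(\<Sum>i\<in>UNIV. ww$i * (A *v u)$i) = (\<Sum>j\<in>UNIV. (transpose A *v ww)$j * u$j)"
    by (rule dot_transpose)
  moreover have "(\<Sum>i\<in>UNIV. ww$i * (A *v u)$i) = \<mu> * (\<Sum>i\<in>UNIV. ww$i * u$i)"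
    by (simp add: eig sum_distrib_left mult_ac)
  moreover have "(\<Sum>j\<in>UNIV. (transpose A *v ww)$j * u$j) = lam * (\<Sum>i\<in>UNIV. ww$i * u$i)"
    unfolding ww_eig by (simp add: sum_distrib_left mult_ac)
  ultimately have "\<mu> * (\<Sum>i\<in>UNIV. ww$i * u$i) = lam * (\<Sum>i\<in>UNIV. ww$i * u$i)" by simp
  moreover have "(\<Sum>i\<in>UNIV. ww$i * u$i) > 0"
  proof -
    obtain k where "u$k \<noteq> 0" using nz by (metis vec_eq_iff zero_index)
    hence "u$k > 0" using nn[of k] by simp
    hence "ww$k * u$k > 0" using ww_pos by simp
    moreover have "ww$k * u$k \<le> (\<Sum>i\<in>UNIV. ww$i * u$i)"
      by (rule member_le_sum) (auto intro: mult_nonneg_nonneg less_imp_le ww_pos nn)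
    ultimately show ?thesis by linarith
  qed
  ultimately show ?thesis by simp
qed

lemma geom_simple:
  assumes eig: "A *v x = lam *\<^sub>R x"
  shows "\<exists>s. x = s *\<^sub>R vv"
proof -
  define s where "s = Max ((\<lambda>i. x$i / vv$i) ` UNIV)"
  have "s \<in> (\<lambda>i. x$i / vv$i) ` UNIV" unfolding s_def by (rule Max_in) auto
  then obtain k where k: "s = x$k / vv$k" by blast
  have le: "x$i / vv$i \<le> s" for i unfolding s_def by (rule Max_ge) auto
  define y where "y = s *\<^sub>R vv - x"
  have ynn: "y$i \<ge> 0" for i
    using le[of i] vv_pos[of i] by (simp add: y_def divide_le_eq mult.commute)
  have yk: "y$k = 0" using k vv_pos[of k] by (simp add: y_def)
  have yeig: "A *v y = lam *\<^sub>R y"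
    by (simp add: y_def matrix_vector_mult_diff_distrib vv_eig eig algebra_simps)
  have "y = 0"
  proof (rule ccontr)
    assume "y \<noteq> 0"
    then obtain j where "y$j \<noteq> 0" by (metis vec_eq_iff zero_index)
    hence "y$j > 0" using ynn[of j] by simp
    hence "y$k > 0" using propagate[OF ynn yeig] by blast
    thus False using yk by simp
  qed
  thus ?thesis by (auto simp: y_def)
qed

lemma nonneg_eig_is_vv:
  assumes nn: "\<And>j. u$j \<ge> 0" and s1: "sum (\<lambda>i. u$i) UNIV = 1" and eig: "A *v u = \<mu> *\<^sub>R u"
  shows "u = vv"
proof -
  have nz: "u \<noteq> 0" using s1 by auto
  have "\<mu> = lam" by (rule eig_nonneg_lam[OF nn nz eig])
  then obtain s where s: "u = s *\<^sub>R vv" using geom_simple eig by blast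
  have "1 = s * sum (\<lambda>i. vv$i) UNIV" using s1 by (simp add: s sum_distrib_left)
  hence "s = 1" using vv_sum by simp
  thus ?thesis using s by simp
qed

end


lemma sum_delta_mult:
  fixes x :: "'a::comm_ring_1^'n"
  shows "(\<Sum>j\<in>UNIV. (if i = j then c else 0) * x$j) = c * x$i"
proof -
  have "(\<Sum>j\<in>UNIV. (if i = j then c else 0) * x$j) = (\<Sum>j\<in>UNIV. if i = j then c * x$j else 0)"
    by (rule sum.cong) auto
  also have "\<dots> = c * x$i" by (subst sum.delta') simp_all
  finally show ?thesis .
qed

lemma comp_lem:
  fixes A :: "real^'n^'n"
  shows "((mat l - A + (\<chi> i j. f$j)) *v x)$i = l * x$i - (A *v x)$i + (\<Sum>j\<in>UNIV. f$j * x$j)"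
proof -
  have "((mat l - A + (\<chi> i j. f$j)) *v x)$i = (\<Sum>j\<in>UNIV. (if i = j then l else 0) * x$j - A$i$j * x$j + f$j * x$j)"
    by (simp add: matrix_vector_mult_def mat_def algebra_simps)
  also have "\<dots> = l * x$i - (A *v x)$i + (\<Sum>j\<in>UNIV. f$j * x$j)"
    by (simp add: sum.distrib sum_subtractf mvc sum_delta_mult)
  finally show ?thesis .
qed

lemma cmp_lem:
  fixes M :: "'a::comm_ring_1^'n^'n"
  shows "((mat c - M) *v x)$i = c * x$i - (M *v x)$i"
proof -
  have "((mat c - M) *v x)$i = (\<Sum>j\<in>UNIV. (if i = j then c else 0) * x$j - M$i$j * x$j)"
    by (simp add: matrix_vector_mult_def mat_def algebra_simps)
  also have "\<dots> = c * x$i - (M *v x)$i"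
    by (simp add: sum_subtractf matrix_vector_mult_def sum_delta_mult)
  finally show ?thesis .
qed

context pf begin

lemma eigval_bound:
  assumes "c \<in> eigenvalues_mat A"
  shows "cmod c \<le> lam"
proof -
  obtain x :: "complex^'n" where x: "x \<noteq> 0" "cmat A *v x = c *s x"
    using assms by (auto simp: eigenvalues_mat_def)
  define t where "t = Max ((\<lambda>i. cmod (x$i) / vv$i) ` UNIV)"
  have "t \<in> (\<lambda>i. cmod (x$i) / vv$i) ` UNIV" unfolding t_def by (rule Max_in) auto
  then obtain k where k: "t = cmod (x$k) / vv$k" by blast
  have le: "cmod (x$i) / vv$i \<le> t" for i unfolding t_def by (rule Max_ge) auto
  have le2: "cmod (x$i) \<le> t * vv$i" for i
    using le[of i] vv_pos[of i] by (simp add: divide_le_eq)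
  obtain j where "x$j \<noteq> 0" using x(1) by (metis vec_eq_iff zero_index)
  hence "cmod (x$j) / vv$j > 0" using vv_pos[of j] by simp
  hence tpos: "t > 0" using le[of j] by linarith
  have xk: "cmod (x$k) = t * vv$k" using k vv_pos[of k] by simp
  have "cmod c * cmod (x$k) = cmod ((cmat A *v x)$k)"
    using x(2) by (simp add: norm_mult)
  also have "\<dots> = cmod (\<Sum>j\<in>UNIV. complex_of_real (A$k$j) * x$j)"
    by (simp add: matrix_vector_mult_def cmat_def)
  also have "\<dots> \<le> (\<Sum>j\<in>UNIV. cmod (complex_of_real (A$k$j) * x$j))"
    by (rule norm_sum)
  also have "\<dots> = (\<Sum>j\<in>UNIV. A$k$j * cmod (x$j))"
    by (simp add: norm_mult nn)
  also have "\<dots> \<le> (\<Sum>j\<in>UNIV. A$k$j * (t * vv$j))"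
    by (rule sum_mono) (simp add: mult_left_mono nn le2)
  also have "\<dots> = t * (A *v vv)$k"
    by (simp add: mvc sum_distrib_left mult_ac)
  also have "\<dots> = t * lam * vv$k" by (simp add: vv_eig)
  finally have "cmod c * (t * vv$k) \<le> lam * (t * vv$k)" by (simp add: xk mult_ac)
  moreover have "t * vv$k > 0" using tpos vv_pos[of k] by simp
  ultimately show ?thesis by (rule mult_right_le_imp_le)
qed

lemma real_eig_in:
  assumes "x \<noteq> 0" "A *v x = r *\<^sub>R x"
  shows "complex_of_real r \<in> eigenvalues_mat A"
proof -
  define xc :: "complex^'n" where "xc = (\<chi> i. complex_of_real (x$i))"
  have "xc \<noteq> 0" using assms(1) by (auto simp: xc_def vec_eq_iff)
  moreover have "cmat A *v xc = complex_of_real r *s xc"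
  proof -
    have "(cmat A *v xc)$i = complex_of_real ((A *v x)$i)" for i
      by (simp add: matrix_vector_mult_def cmat_def xc_def)
    thus ?thesis using assms(2) by (simp add: vec_eq_iff xc_def)
  qed
  ultimately show ?thesis by (auto simp: eigenvalues_mat_def)
qed

lemma lam_in: "complex_of_real lam \<in> eigenvalues_mat A"
proof (rule real_eig_in[OF _ vv_eig])
  show "vv \<noteq> 0" using vv_pos by (metis less_irrefl zero_index)
qed

lemma eigenvalues_finite: "finite (eigenvalues_mat A)"
proof -
  define chp :: "complex poly" where
    "chp = det (\<chi> i j. (if i = j then [:0,1:] else 0) - [:cmat A $i$j:])"
  have ev: "poly chp c = det (mat c - cmat A)" for c
  proof -
    have "poly chp c = det (\<chi> i j. poly ((\<chi> i j. (if i = j then [:0,1:] else 0) - [:cmat A $i$j:]) $i$j) c)"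
      unfolding chp_def by (rule det_map_hom[symmetric]) simp_all
    also have "(\<chi> i j. poly ((\<chi> i j. (if i = j then [:0,1:] else 0) - [:cmat A $i$j:]) $i$j) c) = mat c - cmat A"
      by (simp add: vec_eq_iff mat_def)
    finally show ?thesis .
  qed
  have "chp \<noteq> 0"
  proof
    assume "chp = 0"
    define r where "r = lam + 1"
    have "det (mat (complex_of_real r) - cmat A) = 0" using ev[of "complex_of_real r"] \<open>chp = 0\<close> by simp
    moreover have "det (mat (complex_of_real r) - cmat A) = complex_of_real (det (mat r - A))"
    proof -
      have "complex_of_real (det (mat r - A)) = det (\<chi> i j. complex_of_real ((mat r - A)$i$j))"
        by (rule det_map_hom[symmetric]) simp_all
      also have "(\<chi> i j. complex_of_real ((mat r - A)$i$j)) = mat (complex_of_real r) - cmat A"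
        by (simp add: vec_eq_iff mat_def cmat_def)
      finally show ?thesis by simp
    qed
    ultimately have "det (mat r - A) = 0" by simp
    then obtain x where x: "x \<noteq> 0" "(mat r - A) *v x = 0" using det_zero_kernel by blast
    have "A *v x = r *\<^sub>R x"
    proof -
      have "(A *v x)$i = r * x$i" for i using x(2) cmp_lem[of r A x i] by (simp add: vec_eq_iff)
      thus ?thesis by (simp add: vec_eq_iff)
    qed
    hence "cmod (complex_of_real r) \<le> lam" using eigval_bound real_eig_in[OF x(1)] by blast
    thus False using lam_pos by (simp add: r_def)
  qed
  moreover have "eigenvalues_mat A \<subseteq> {c. poly chp c = 0}"
  proof
    fix c assume "c \<in> eigenvalues_mat A"
    then obtain x :: "complex^'n" where x: "x \<noteq> 0" "cmat A *v x = c *s x"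
      by (auto simp: eigenvalues_mat_def)
    have "(mat c - cmat A) *v x = 0"
      using x(2) by (simp add: vec_eq_iff cmp_lem)
    hence "det (mat c - cmat A) = 0" using det_kernel_zero x(1) by blast
    thus "c \<in> {c. poly chp c = 0}" by (simp add: ev)
  qed
  ultimately show ?thesis using poly_roots_finite finite_subset by blast
qed

lemma spectral_radius_eq: "spectral_radius_mat A = lam"
  unfolding spectral_radius_mat_def
proof (rule Max_eqI)
  show "finite (cmod ` eigenvalues_mat A)" using eigenvalues_finite by simp
  show "y \<le> lam" if "y \<in> cmod ` eigenvalues_mat A" for y using that eigval_bound by auto
  show "lam \<in> cmod ` eigenvalues_mat A"
    using lam_in lam_pos by (metis abs_of_pos image_eqI norm_of_real)
qed

lemma perron_vec_eq: "perron_vec A = vv"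
  unfolding perron_vec_def spectral_radius_eq
proof (rule the_equality)
  show "(\<forall>i. 0 \<le> vv$i) \<and> (\<Sum>i\<in>UNIV. vv$i) = 1 \<and> A *v vv = lam *\<^sub>R vv"
    using vv_pos vv_sum vv_eig by (simp add: less_imp_le)
  show "u = vv" if "(\<forall>i. 0 \<le> u$i) \<and> (\<Sum>i\<in>UNIV. u$i) = 1 \<and> A *v u = lam *\<^sub>R u" for u
    using that nonneg_eig_is_vv by blast
qed

lemma det_level:
  "det (mat lam - A + (\<chi> i j. f$j)) = 0 \<longleftrightarrow> (\<Sum>j\<in>UNIV. f$j * vv$j) = 0"
proof
  assume "(\<Sum>j\<in>UNIV. f$j * vv$j) = 0"
  hence "((mat lam - A + (\<chi> i j. f$j)) *v vv)$i = 0" for i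
    using comp_lem[of lam A f vv i] vv_eig by simp
  hence "(mat lam - A + (\<chi> i j. f$j)) *v vv = 0" by (simp add: vec_eq_iff)
  moreover have "vv \<noteq> 0" using vv_pos by (metis less_irrefl zero_index)
  ultimately show "det (mat lam - A + (\<chi> i j. f$j)) = 0" using det_kernel_zero by blast
next
  assume "det (mat lam - A + (\<chi> i j. f$j)) = 0"
  then obtain x where x: "x \<noteq> 0" "(mat lam - A + (\<chi> i j. f$j)) *v x = 0"
    using det_zero_kernel by blast
  define d where "d = (\<Sum>j\<in>UNIV. f$j * x$j)"
  have ci: "(A *v x)$i = lam * x$i + d" for i
    using x(2) comp_lem[of lam A f x i] by (simp add: vec_eq_iff d_def)
  have "(\<Sum>i\<in>UNIV. ww$i * (A *v x)$i) = (\<Sum>j\<in>UNIV. (transpose A *v ww)$j * x$j)"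
    by (rule dot_transpose)
  moreover have "(\<Sum>j\<in>UNIV. (transpose A *v ww)$j * x$j) = lam * (\<Sum>i\<in>UNIV. ww$i * x$i)"
    unfolding ww_eig by (simp add: sum_distrib_left mult_ac)
  moreover have "(\<Sum>i\<in>UNIV. ww$i * (A *v x)$i) = lam * (\<Sum>i\<in>UNIV. ww$i * x$i) + d * (\<Sum>i\<in>UNIV. ww$i)"
    by (simp add: ci algebra_simps sum.distrib sum_distrib_left)
  ultimately have "d * (\<Sum>i\<in>UNIV. ww$i) = 0" by simp
  moreover have "(\<Sum>i\<in>UNIV. ww$i) > 0" by (rule sum_pos) (auto simp: ww_pos)
  ultimately have d0: "d = 0" by simp
  hence "A *v x = lam *\<^sub>R x" using ci by (simp add: vec_eq_iff)
  then obtain s where s: "x = s *\<^sub>R vv" using geom_simple by blast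
  have "s \<noteq> 0" using x(1) s by auto
  moreover have "s * (\<Sum>j\<in>UNIV. f$j * vv$j) = d"
    by (simp add: d_def s sum_distrib_left mult_ac)
  ultimately show "(\<Sum>j\<in>UNIV. f$j * vv$j) = 0" using d0 by simp
qed

end


lemma side_eventually:
  fixes f :: "real \<Rightarrow> real"
  assumes cont: "continuous_on {0<..} f" and fin: "finite {t. t > 0 \<and> f t = c}"
  shows "eventually (\<lambda>t. f t < c) (at_right 0) \<or> eventually (\<lambda>t. f t > c) (at_right 0)"
proof -
  define Z where "Z = {t. t > 0 \<and> f t = c}"
  define d where "d = Min (insert 1 Z)"
  have dpos: "d > 0" unfolding d_def using fin by (auto simp: Z_def)
  have ne: "f t \<noteq> c" if "0 < t" "t < d" for t
  proof
    assume "f t = c"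
    hence "t \<in> Z" using that by (simp add: Z_def)
    hence "d \<le> t" unfolding d_def using fin by (simp add: Z_def)
    thus False using that by simp
  qed
  have one_side: "(\<forall>t. 0 < t \<and> t < d \<longrightarrow> f t < c) \<or> (\<forall>t. 0 < t \<and> t < d \<longrightarrow> f t > c)"
  proof (rule ccontr)
    assume "\<not> ?thesis"
    then obtain a b where a: "0 < a" "a < d" "\<not> f a < c" and b: "0 < b" "b < d" "\<not> f b > c" by blast
    have fa: "f a > c" using a ne[of a] by linarith
    have fb: "f b < c" using b ne[of b] by linarith
    have "\<exists>x. min a b \<le> x \<and> x \<le> max a b \<and> f x = c"
    proof (cases "a \<le> b")
      case True
      have "continuous_on {a..b} f" using cont a b by (auto intro: continuous_on_subset)
      then obtain x where "a \<le> x" "x \<le> b" "f x = c" using IVT2'[of f b c a] fa fb True by auto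
      thus ?thesis using True by auto
    next
      case False
      have "continuous_on {b..a} f" using cont a b by (auto intro: continuous_on_subset)
      then obtain x where "b \<le> x" "x \<le> a" "f x = c" using IVT'[of f b c a] fa fb False by auto
      thus ?thesis using False by auto
    qed
    then obtain x where "min a b \<le> x" "x \<le> max a b" "f x = c" by blast
    moreover have "0 < x" "x < d" using calculation a b by auto
    ultimately show False using ne by blast
  qed
  thus ?thesis unfolding eventually_at_right_field using dpos by blast
qed

lemma limit_from_levels:
  fixes f :: "real \<Rightarrow> real"
  assumes cont: "continuous_on {0<..} f" and bnd: "\<And>t. t > 0 \<Longrightarrow> 0 \<le> f t \<and> f t \<le> 1"
    and fin: "finite B" and lev: "\<And>c. c \<notin> B \<Longrightarrow> finite {t. t > 0 \<and> f t = c}"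
  shows "\<exists>L. (f \<longlongrightarrow> L) (at_right 0)"
proof -
  define S where "S = {c. c \<notin> B \<and> eventually (\<lambda>t. f t < c) (at_right 0)}"
  define c0 where "c0 = Max (insert 1 B) + 1"
  have "c0 \<notin> B"
  proof
    assume "c0 \<in> B"
    hence "c0 \<le> Max (insert 1 B)" using fin by simp
    thus False by (simp add: c0_def)
  qed
  moreover have "eventually (\<lambda>t. f t < c0) (at_right 0)"
  proof -
    have "1 \<le> Max (insert 1 B)" using fin by simp
    hence "1 < c0" by (simp add: c0_def)
    thus ?thesis unfolding eventually_at_right_field using bnd
      by (intro exI[of _ 1]) (auto intro: le_less_trans)
  qed
  ultimately have Sne: "S \<noteq> {}" by (auto simp: S_def)
  have Sbdd: "bdd_below S"
  proof (rule bdd_belowI)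
    fix c assume "c \<in> S"
    hence "eventually (\<lambda>t. f t < c \<and> t > 0) (at_right 0)"
      by (auto simp: S_def eventually_at_right_less intro: eventually_conj)
    then obtain t where "f t < c" "t > 0" using eventually_happens trivial_limit_at_right_real by blast
    thus "0 \<le> c" using bnd[of t] by linarith
  qed
  define L where "L = Inf S"
  have "(f \<longlongrightarrow> L) (at_right 0)"
  proof (rule order_tendstoI)
    fix a assume "L < a"
    then obtain c where "c \<in> S" "c < a" using cInf_lessD[OF Sne] by (auto simp: L_def)
    thus "eventually (\<lambda>t. f t < a) (at_right 0)"
      by (auto simp: S_def elim: eventually_mono)
  next
    fix a assume "a < L"
    have "infinite ({a<..<L} - B)" using \<open>a < L\<close> fin by (simp add: Diff_infinite_finite)
    then obtain c where c: "c \<in> {a<..<L}" "c \<notin> B"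
      by (metis Diff_iff finite.emptyI ex_in_conv)
    have "c \<notin> S"
    proof
      assume "c \<in> S"
      hence "L \<le> c" unfolding L_def by (rule cInf_lower[OF _ Sbdd])
      thus False using c by simp
    qed
    hence "\<not> eventually (\<lambda>t. f t < c) (at_right 0)" using c by (simp add: S_def)
    hence "eventually (\<lambda>t. f t > c) (at_right 0)"
      using side_eventually[OF cont lev[OF c(2)]] by blast
    thus "eventually (\<lambda>t. a < f t) (at_right 0)"
      using c by (auto elim: eventually_mono)
  qed
  thus ?thesis by blast
qed


lemma smult_as_mult: "smult c p = [:c:] * p" by simp

lemma prime_coprime_const:
  fixes Q F :: "'a::{idom} poly"
  assumes pQ: "prime_elem Q" and dQ: "degree Q \<noteq> 0" and nd: "\<not> Q dvd F"
  shows "\<exists>a b r. r \<noteq> 0 \<and> a * Q + b * F = [:r:]"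
proof -
  define J where "J = {H. \<exists>a b. H = a * Q + b * F}"
  have QJ: "Q \<in> J" unfolding J_def by (intro CollectI exI[of _ 1] exI[of _ 0]) simp
  have FJ: "F \<in> J" unfolding J_def by (intro CollectI exI[of _ 0] exI[of _ 1]) simp
  have Q0: "Q \<noteq> 0" using pQ by auto
  define N where "N = (LEAST n. \<exists>G\<in>J. G \<noteq> 0 \<and> degree G = n)"
  have "\<exists>G\<in>J. G \<noteq> 0 \<and> degree G = N"
    unfolding N_def by (rule LeastI[of _ "degree Q"]) (use QJ Q0 in blast)
  then obtain G where G: "G \<in> J" "G \<noteq> 0" "degree G = N" by blast
  have minim: "H = 0" if "H \<in> J" "degree H < N" for H
  proof (rule ccontr)
    assume "H \<noteq> 0"
    hence "N \<le> degree H" unfolding N_def using that(1) by (intro Least_le) blast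
    thus False using that(2) by simp
  qed
  show ?thesis
  proof (cases "degree G = 0")
    case True
    then obtain r where "G = [:r:]" by (metis degree_eq_zeroE)
    moreover from G(1) obtain a b where "G = a * Q + b * F" by (auto simp: J_def)
    ultimately show ?thesis using G(2) by auto
  next
    case False
    define g where "g = coeff G (degree G)"
    have g0: "g \<noteq> 0" using G(2) by (simp add: g_def)
    have divs: "\<exists>e. G dvd [:g ^ e:] * H" if "H \<in> J" for H
    proof -
      obtain q rm where qr: "pseudo_divmod H G = (q, rm)" by (metis surj_pair)
      define e where "e = Suc (degree H) - degree G"
      have eq: "smult (g ^ e) H = G * q + rm" and dr: "rm = 0 \<or> degree rm < degree G"
        using pseudo_divmod[OF G(2) qr] by (simp_all add: g_def e_def)
      have "rm \<in> J"
      proof -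
        from that obtain a b where ab: "H = a * Q + b * F" by (auto simp: J_def)
        from G(1) obtain a' b' where ab': "G = a' * Q + b' * F" by (auto simp: J_def)
        have "rm = [:g ^ e:] * H - G * q" using eq by (simp add: algebra_simps)
        also have "\<dots> = ([:g ^ e:] * a - a' * q) * Q + ([:g ^ e:] * b - b' * q) * F"
          by (simp add: ab ab' algebra_simps)
        finally show ?thesis by (auto simp: J_def)
      qed
      hence "rm = 0" using dr minim G(3) by blast
      hence "[:g ^ e:] * H = G * q" using eq by simp
      thus ?thesis by (metis dvdI)
    qed
    obtain e1 where e1: "G dvd [:g ^ e1:] * Q" using divs[OF QJ] by blast
    obtain e2 where e2: "G dvd [:g ^ e2:] * F" using divs[OF FJ] by blast
    have const_nd: "\<not> Q dvd [:c:]" if "c \<noteq> 0" for c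
    proof
      assume "Q dvd [:c:]"
      hence "degree Q \<le> degree [:c:]" using that by (intro dvd_imp_degree_le) auto
      thus False using dQ by simp
    qed
    from e1 obtain s where s: "[:g ^ e1:] * Q = G * s" by (metis dvdE)
    have "Q dvd G * s" using s by (metis dvd_triv_right)
    hence "Q dvd G \<or> Q dvd s" using pQ by (simp add: prime_elem_dvd_mult_iff)
    thus ?thesis
    proof
      assume "Q dvd s"
      then obtain s' where "s = Q * s'" by (metis dvdE)
      hence "[:g ^ e1:] * Q = (G * s') * Q" using s by (simp add: mult_ac)
      hence "[:g ^ e1:] = G * s'" using Q0 by (metis mult_cancel_right)
      moreover have "G * s' \<noteq> 0" using calculation g0 by auto
      ultimately have "degree G + degree s' = 0"
        using degree_mult_eq[of G s'] by (metis degree_pCons_0 mult_eq_0_iff)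
      thus ?thesis using False by simp
    next
      assume "Q dvd G"
      hence "Q dvd [:g ^ e2:] * F" using e2 dvd_trans by blast
      hence "Q dvd [:g ^ e2:] \<or> Q dvd F" using pQ prime_elem_dvd_mult_iff by blast
      thus ?thesis using const_nd[of "g ^ e2"] g0 nd by simp
    qed
  qed
qed


context pf begin
lemma det_above: "r > lam \<Longrightarrow> det (mat r - A) \<noteq> 0"
proof
  assume r: "r > lam" and "det (mat r - A) = 0"
  then obtain x where x: "x \<noteq> 0" "(mat r - A) *v x = 0" using det_zero_kernel by blast
  have "(A *v x)$i = r * x$i" for i using x(2) cmp_lem[of r A x i] by (simp add: vec_eq_iff)
  hence "A *v x = r *\<^sub>R x" by (simp add: vec_eq_iff)
  hence "cmod (complex_of_real r) \<le> lam" using eigval_bound real_eig_in[OF x(1)] by blast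
  thus False using r lam_pos by simp
qed

lemma det_at_lam: "det (mat lam - A) = 0"
proof -
  have "(mat lam - A) *v vv = 0" using vv_eig by (simp add: vec_eq_iff cmp_lem)
  moreover have "vv \<noteq> 0" using vv_pos by (metis less_irrefl zero_index)
  ultimately show ?thesis using det_kernel_zero by blast
qed
end

lemma sp_props:
  fixes M :: "nat \<Rightarrow> real^'n^'n"
  assumes "\<And>k. k \<in> set L \<Longrightarrow> nonneg_mat (M k)" "\<tau> > 0"
  shows "(\<forall>i j. foldr (\<lambda>k P. (M k + \<tau> *\<^sub>R mat 1) ** P) L (mat 1) $i$j \<ge> 0) \<and>
         (\<forall>i. foldr (\<lambda>k P. (M k + \<tau> *\<^sub>R mat 1) ** P) L (mat 1) $i$i \<ge> \<tau> ^ length L)"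
  using assms(1)
proof (induction L)
  case Nil
  show ?case by (simp add: mat_def)
next
  case (Cons k L)
  define P where "P = foldr (\<lambda>k P. (M k + \<tau> *\<^sub>R mat 1) ** P) L (mat 1)"
  define X where "X = M k + \<tau> *\<^sub>R mat 1"
  have IH: "\<forall>i j. P$i$j \<ge> 0" "\<forall>i. P$i$i \<ge> \<tau> ^ length L"
    using Cons by (auto simp: P_def)
  have Xnn: "X$i$j \<ge> 0" for i j
    using Cons.prems[of k] assms(2) by (simp add: X_def nonneg_mat_def mat_def)
  have Xd: "X$i$i \<ge> \<tau>" for i
    using Cons.prems[of k] by (simp add: X_def nonneg_mat_def mat_def)
  have e: "(X ** P)$i$j = (\<Sum>l\<in>UNIV. X$i$l * P$l$j)" for i j
    by (simp add: matrix_matrix_mult_def)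
  have nn: "(X ** P)$i$j \<ge> 0" for i j
    unfolding e by (rule sum_nonneg) (simp add: Xnn IH)
  have dg: "(X ** P)$i$i \<ge> \<tau> ^ length (k # L)" for i
  proof -
    have "X$i$i * P$i$i \<le> (\<Sum>l\<in>UNIV. X$i$l * P$l$i)"
      by (rule member_le_sum[where f="\<lambda>l. X$i$l * P$l$i"]) (auto simp: Xnn IH)
    moreover have "\<tau> * \<tau> ^ length L \<le> X$i$i * P$i$i"
      using Xd[of i] IH(2) assms(2) by (intro mult_mono) auto
    ultimately show ?thesis unfolding e by simp
  qed
  show ?case using nn dg by (simp add: P_def[symmetric] X_def[symmetric])
qed

lemma sp_poly:
  fixes M :: "nat \<Rightarrow> real^'n^'n"
  shows "poly (foldr (\<lambda>k P. ((\<chi> i j. [:M k $i$j:]) + mat [:0,1:]) ** P) L (mat 1) $i$j) \<tau> =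
         foldr (\<lambda>k P. (M k + \<tau> *\<^sub>R mat 1) ** P) L (mat 1) $i$j"
proof (induction L arbitrary: i j)
  case Nil
  show ?case by (simp add: mat_def)
next
  case (Cons k L)
  define Pp where "Pp = foldr (\<lambda>k P. ((\<chi> i j. [:M k $i$j:]) + mat [:0,1:]) ** P) L (mat 1)"
  define Pr where "Pr = foldr (\<lambda>k P. (M k + \<tau> *\<^sub>R mat 1) ** P) L (mat 1)"
  define Xp :: "real poly^'n^'n" where "Xp = (\<chi> i j. [:M k $i$j:]) + mat [:0,1:]"
  define Xr where "Xr = M k + \<tau> *\<^sub>R mat 1"
  have xe: "poly (Xp$i$l) \<tau> = Xr$i$l" for i l by (simp add: Xp_def Xr_def mat_def)
  have "poly ((Xp ** Pp)$i$j) \<tau> = (\<Sum>l\<in>UNIV. poly (Xp$i$l) \<tau> * poly (Pp$l$j) \<tau>)"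
    by (simp add: matrix_matrix_mult_def poly_sum)
  also have "\<dots> = (\<Sum>l\<in>UNIV. Xr$i$l * Pr$l$j)"
    using Cons.IH by (simp add: xe Pp_def Pr_def)
  also have "\<dots> = (Xr ** Pr)$i$j" by (simp add: matrix_matrix_mult_def)
  finally show ?case by (simp add: Pp_def Pr_def Xp_def Xr_def)
qed


definition ev2 :: "real \<Rightarrow> real \<Rightarrow> real poly poly \<Rightarrow> real" where
  "ev2 t x p = poly (poly p [:x:]) t"

lemma ev2_add: "ev2 t x (p + q) = ev2 t x p + ev2 t x q"
  and ev2_mult: "ev2 t x (p * q) = ev2 t x p * ev2 t x q"
  and ev2_1: "ev2 t x 1 = 1" and ev2_0: "ev2 t x 0 = 0"
  and ev2_const: "ev2 t x [:r:] = poly r t"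
  and ev2_X: "ev2 t x [:0,1:] = x"
  by (simp_all add: ev2_def)

lemma ev2_diff: "ev2 t x (p - q) = ev2 t x p - ev2 t x q"
  by (simp add: ev2_def)

lemma ev2_det: "det (\<chi> i j. ev2 t x (X$i$j)) = ev2 t x (det X)"
  by (rule det_map_hom) (simp_all add: ev2_add ev2_mult ev2_1 ev2_0)

lemma ev2_prod_mset_zero: "ev2 t x (prod_mset S) = 0 \<Longrightarrow> \<exists>Q\<in>#S. ev2 t x Q = 0"
  by (induction S) (auto simp: ev2_mult ev2_1)

theorem mainTheorem1:
  fixes M :: "nat \<Rightarrow> real^'n^'n" and K :: nat
  assumes "K \<ge> 1"
    and "\<And>k. k < K \<Longrightarrow> nonneg_mat (M k)"
    and "\<And>\<tau>. \<tau> > 0 \<Longrightarrow> irreducible_mat (shifted_prod M K \<tau>) \<and> aperiodic_mat (shifted_prod M K \<tau>)"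
  shows "\<exists>L. ((\<lambda>\<tau>. perron_vec (shifted_prod M K \<tau>)) \<longlongrightarrow> L) (at_right 0)"
proof -
  define A where "A = shifted_prod M K"
  define Ap :: "real poly^'n^'n" where
    "Ap = foldr (\<lambda>k P. ((\<chi> i j. [:M k $i$j:]) + mat [:0,1:]) ** P) [0..<K] (mat 1)"
  have ApE: "poly (Ap$i$j) t = A t $i$j" for i j t
    unfolding Ap_def A_def shifted_prod_def by (rule sp_poly)
  have pfA: "pf (A t)" if "t > 0" for t
  proof
    have irr: "irreducible_mat (A t)" using assms(3)[OF that] by (simp add: A_def)
    show "A t $i$j \<ge> 0" for i j using irr by (simp add: irreducible_mat_def nonneg_mat_def)
    show "(i,j) \<in> (mat_graph (A t))\<^sup>*" for i j using irr by (simp add: irreducible_mat_def)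
    have "A t $i$i \<ge> t ^ K" for i
      using sp_props[of "[0..<K]" M t] assms(2) that by (simp add: A_def shifted_prod_def)
    moreover have "t ^ K > 0" using that by simp
    ultimately show "A t $i$i > 0" for i using less_le_trans by blast
  qed
  define v where "v t = perron_vec (A t)" for t
  define rho where "rho t = spectral_radius_mat (A t)" for t
  have vE: "v t = pf.vv (A t)" if "t > 0" for t
    unfolding v_def using pf.perron_vec_eq[OF pfA[OF that]] .
  have rhoE: "rho t = pf.lam (A t)" if "t > 0" for t
    unfolding rho_def using pf.spectral_radius_eq[OF pfA[OF that]] .
  have vpos: "v t $ i > 0" if "t > 0" for t i using pf.vv_pos[OF pfA[OF that]] vE[OF that] by simp
  have vsum: "sum (\<lambda>i. v t $ i) UNIV = 1" if "t > 0" for t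
    using pf.vv_sum[OF pfA[OF that]] vE[OF that] by simp
  have vS: "v t \<in> psimplex" if "t > 0" for t
    using vpos[OF that] vsum[OF that] by (auto simp: psimplex_def less_imp_le)
  define C :: "(real \<times> (real^'n)) set" where
    "C = (\<Inter>i. {p. (\<Sum>j\<in>UNIV. poly (Ap$i$j) (fst p) * snd p $ j) =
                (\<Sum>k\<in>UNIV. \<Sum>j\<in>UNIV. poly (Ap$k$j) (fst p) * snd p $ j) * snd p $ i})"
  have closedC: "closed C" unfolding C_def
    by (intro closed_INT ballI closed_Collect_eq continuous_intros)
  have C_alt: "(t, u) \<in> C \<longleftrightarrow> (\<forall>i. (A t *v u)$i = (\<Sum>k\<in>UNIV. (A t *v u)$k) * u$i)" for t u
    unfolding C_def by (simp only: mvc ApE fst_conv snd_conv INT_iff mem_Collect_eq ball_UNIV)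
  have graph: "(\<lambda>x. (x, v x)) ` {0<..} = {0<..} \<times> psimplex \<inter> C"
  proof
    show "(\<lambda>x. (x, v x)) ` {0<..} \<subseteq> {0<..} \<times> psimplex \<inter> C"
    proof
      fix p assume "p \<in> (\<lambda>x. (x, v x)) ` {0<..}"
      then obtain t where t: "t \<in> {0<..}" and p: "p = (t, v t)" by blast
      hence t0: "t > 0" by simp
      have eig: "A t *v v t = rho t *\<^sub>R v t"
        using pf.vv_eig[OF pfA[OF t0]] vE[OF t0] rhoE[OF t0] by simp
      have "(\<Sum>k\<in>UNIV. (A t *v v t)$k) = (\<Sum>k\<in>UNIV. rho t * v t $ k)"
        by (simp add: eig)
      also have "\<dots> = rho t * (\<Sum>k\<in>UNIV. v t $ k)" by (rule sum_distrib_left[symmetric])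
      also have "\<dots> = rho t" using vsum[OF t0] by simp
      finally have sumf: "(\<Sum>k\<in>UNIV. (A t *v v t)$k) = rho t" .
      have ci: "(A t *v v t)$i = rho t * v t $ i" for i by (simp add: eig)
      have "\<forall>i. (A t *v v t)$i = (\<Sum>k\<in>UNIV. (A t *v v t)$k) * v t $ i"
      proof
        fix i
        show "(A t *v v t)$i = (\<Sum>k\<in>UNIV. (A t *v v t)$k) * v t $ i"
          by (subst sumf) (rule ci)
      qed
      hence "(t, v t) \<in> C" by (rule C_alt[THEN iffD2])
      thus "p \<in> {0<..} \<times> psimplex \<inter> C" using vS[OF t0] t0 unfolding p by blast
    qed
    show "{0<..} \<times> psimplex \<inter> C \<subseteq> (\<lambda>x. (x, v x)) ` {0<..}"
    proof
      fix p assume pin: "p \<in> {0<..} \<times> psimplex \<inter> C"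
      obtain t u where p: "p = (t, u)" by (cases p)
      have t: "t \<in> {0<..}" and u: "u \<in> psimplex" and uC: "(t, u) \<in> C" using pin p by auto
      hence t0: "t > 0" by simp
      have "\<forall>i. (A t *v u)$i = (\<Sum>k\<in>UNIV. (A t *v u)$k) * u $ i"
        using uC by (rule C_alt[THEN iffD1])
      hence h: "(A t *v u)$i = ((\<Sum>k\<in>UNIV. (A t *v u)$k) *\<^sub>R u)$i" for i
        unfolding vector_scaleR_component real_scaleR_def by blast
      have eig: "A t *v u = (\<Sum>k\<in>UNIV. (A t *v u)$k) *\<^sub>R u"
        by (rule iffD2[OF vec_eq_iff]) (blast intro: h)
      have nnu: "\<And>j. u$j \<ge> 0" and su: "sum (\<lambda>i. u$i) UNIV = 1" using u by (auto simp: psimplex_def)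
      have "u = pf.vv (A t)"
        by (rule pf.nonneg_eig_is_vv[OF pfA[OF t0] nnu su eig])
      hence "u = v t" using vE[OF t0] by simp
      thus "p \<in> (\<lambda>x. (x, v x)) ` {0<..}" using t p by auto
    qed
  qed
  have vcont: "continuous_on {0<..} v"
  proof -
    have fim: "v \<in> {0<..} \<rightarrow> psimplex" using vS by auto
    have "closedin (top_of_set ({0<..} \<times> psimplex)) ((\<lambda>x. (x, v x)) ` {0<..})"
      unfolding graph by (rule closedin_closed_Int[OF closedC])
    thus ?thesis using continuous_closed_graph_eq[OF compact_psimplex fim] by blast
  qed
  define B2 :: "real poly poly^'n^'n" where
    "B2 = (\<chi> i j. (if i = j then [:0,1:] else 0) - [:Ap$i$j:])"
  define P where "P = det B2"
  have evP: "ev2 t x P = det (mat x - A t)" for t x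
  proof -
    have "ev2 t x P = det (\<chi> i j. ev2 t x (B2$i$j))" unfolding P_def by (rule ev2_det[symmetric])
    also have "(\<chi> i j. ev2 t x (B2$i$j)) = mat x - A t"
      by (simp add: vec_eq_iff B2_def mat_def ev2_diff ev2_const ev2_X ev2_0 ApE)
    finally show ?thesis .
  qed
  have P0: "P \<noteq> 0"
  proof
    assume "P = 0"
    hence "det (mat (pf.lam (A 1) + 1) - A 1) = 0" using evP[of 1 "pf.lam (A 1) + 1"] by (simp add: ev2_0)
    thus False using pf.det_above[OF pfA, of 1 "pf.lam (A 1) + 1"] by simp
  qed
  have Proot: "ev2 t (rho t) P = 0" if "t > 0" for t
    using pf.det_at_lam[OF pfA[OF that]] rhoE[OF that] evP by simp
  define PS where "PS = prime_factorization P"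
  have PSroot: "\<exists>Q\<in>#PS. ev2 t (rho t) Q = 0" if "t > 0" for t
  proof -
    have "normalize (prod_mset PS) = normalize P"
      unfolding PS_def by (rule prod_mset_prime_factorization_weak[OF P0])
    hence "P dvd prod_mset PS" by (metis dvd_normalize_iff dvd_refl)
    then obtain w where "prod_mset PS = P * w" by (metis dvdE)
    hence "ev2 t (rho t) (prod_mset PS) = 0" using Proot[OF that] by (simp add: ev2_mult)
    thus ?thesis by (rule ev2_prod_mset_zero)
  qed
  have coord: "\<exists>l. ((\<lambda>t. v t $ i0) \<longlongrightarrow> l) (at_right 0)" for i0
  proof -
    define fv :: "real \<Rightarrow> real^'n" where "fv c = (\<chi> j. (if j = i0 then 1 else 0) - c)" for c
    define Fc where "Fc c = det (B2 + (\<chi> i j. [:[:fv c $ j:]:]))" for c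
    have evF: "ev2 t x (Fc c) = det (mat x - A t + (\<chi> i j. fv c $ j))" for t x c
    proof -
      have "ev2 t x (Fc c) = det (\<chi> i j. ev2 t x ((B2 + (\<chi> i j. [:[:fv c $ j:]:]))$i$j))"
        unfolding Fc_def by (rule ev2_det[symmetric])
      also have "(\<chi> i j. ev2 t x ((B2 + (\<chi> i j. [:[:fv c $ j:]:]))$i$j)) = mat x - A t + (\<chi> i j. fv c $ j)"
        by (simp add: vec_eq_iff B2_def mat_def ev2_diff ev2_add ev2_const ev2_X ev2_0 ApE)
      finally show ?thesis .
    qed
    have level: "ev2 t (rho t) (Fc c) = 0 \<longleftrightarrow> v t $ i0 = c" if "t > 0" for t c
    proof -
      have s: "(\<Sum>j\<in>UNIV. fv c $ j * v t $ j) = v t $ i0 - c"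
      proof -
        have e: "fv c $ j * v t $ j = (if j = i0 then v t $ j else 0) - c * v t $ j" for j
          by (cases "j = i0") (simp_all add: fv_def algebra_simps)
        have "(\<Sum>j\<in>UNIV. fv c $ j * v t $ j) = (\<Sum>j\<in>UNIV. (if j = i0 then v t $ j else 0)) - (\<Sum>j\<in>UNIV. c * v t $ j)"
          by (simp only: e sum_subtractf)
        also have "\<dots> = v t $ i0 - c * (\<Sum>j\<in>UNIV. v t $ j)" by (simp add: sum_distrib_left)
        also have "\<dots> = v t $ i0 - c" using vsum[OF that] by simp
        finally show ?thesis .
      qed
      show ?thesis
        using pf.det_level[OF pfA[OF that], of "fv c"] evF[of t "rho t" c] rhoE[OF that] vE[OF that] s
        by simp
    qed
    define Z where "Z Q = {t. t > 0 \<and> ev2 t (rho t) Q = 0}" for Q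
    define B where "B = {c. \<exists>Q\<in>#PS. Z Q \<noteq> {} \<and> Q dvd Fc c}"
    have finB: "finite B"
    proof -
      have "B = (\<Union>Q\<in>set_mset PS. {c. Z Q \<noteq> {} \<and> Q dvd Fc c})" by (auto simp: B_def)
      moreover have "finite {c. Z Q \<noteq> {} \<and> Q dvd Fc c}" for Q
      proof (cases "Z Q = {}")
        case True thus ?thesis by simp
      next
        case False
        then obtain t where t: "t > 0" "ev2 t (rho t) Q = 0" by (auto simp: Z_def)
        have "{c. Z Q \<noteq> {} \<and> Q dvd Fc c} \<subseteq> {v t $ i0}"
        proof clarify
          fix c assume "Q dvd Fc c"
          then obtain w where "Fc c = Q * w" by (metis dvdE)
          hence "ev2 t (rho t) (Fc c) = 0" using t(2) by (simp add: ev2_mult)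
          thus "c = v t $ i0" using level[OF t(1)] by simp
        qed
        thus ?thesis by (rule finite_subset) simp
      qed
      ultimately show ?thesis by simp
    qed
    have lev: "finite {t. t > 0 \<and> v t $ i0 = c}" if cB: "c \<notin> B" for c
    proof (rule ccontr)
      define Lc where "Lc = {t. t > 0 \<and> v t $ i0 = c}"
      assume "infinite {t. t > 0 \<and> v t $ i0 = c}"
      hence inf: "infinite Lc" by (simp add: Lc_def)
      have "Lc \<subseteq> (\<Union>Q\<in>set_mset PS. Lc \<inter> Z Q)"
        using PSroot by (auto simp: Lc_def Z_def)
      hence "infinite (\<Union>Q\<in>set_mset PS. Lc \<inter> Z Q)" using inf finite_subset by blast
      then obtain Q where Q: "Q \<in># PS" "infinite (Lc \<inter> Z Q)" by blast
      have ZQ: "Z Q \<noteq> {}" using Q(2) by auto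
      have nd: "\<not> Q dvd Fc c" using cB Q(1) ZQ by (auto simp: B_def)
      have pQ: "prime_elem Q" using Q(1) by (auto simp: PS_def intro: prime_imp_prime_elem)
      show False
      proof (cases "degree Q = 0")
        case True
        then obtain q where q: "Q = [:q:]" by (metis degree_eq_zeroE)
        have "q \<noteq> 0" using pQ q by auto
        have "Lc \<inter> Z Q \<subseteq> {t. poly q t = 0}" by (auto simp: Z_def q ev2_const)
        moreover have "finite {t. poly q t = 0}" using \<open>q \<noteq> 0\<close> by (rule poly_roots_finite)
        ultimately show False using Q(2) finite_subset by blast
      next
        case False
        obtain a b r where abr: "r \<noteq> 0" "a * Q + b * Fc c = [:r:]"
          using prime_coprime_const[OF pQ False nd] by blast
        have "Lc \<inter> Z Q \<subseteq> {t. poly r t = 0}"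
        proof clarify
          fix t assume t: "t \<in> Lc" "t \<in> Z Q"
          hence t0: "t > 0" and tv: "v t $ i0 = c" and tq: "ev2 t (rho t) Q = 0"
            by (auto simp: Lc_def Z_def)
          have "ev2 t (rho t) (Fc c) = 0" using level[OF t0] tv by simp
          hence "ev2 t (rho t) (a * Q + b * Fc c) = 0" using tq by (simp add: ev2_add ev2_mult)
          thus "poly r t = 0" using abr(2) by (simp add: ev2_const)
        qed
        moreover have "finite {t. poly r t = 0}" using abr(1) by (rule poly_roots_finite)
        ultimately show False using Q(2) finite_subset by blast
      qed
    qed
    have bnd: "0 \<le> v t $ i0 \<and> v t $ i0 \<le> 1" if "t > 0" for t
    proof
      show "0 \<le> v t $ i0" using vpos[OF that] by (simp add: less_imp_le)
      have "v t $ i0 \<le> sum (\<lambda>i. v t $ i) UNIV"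
        by (rule member_le_sum) (auto intro: less_imp_le vpos[OF that])
      thus "v t $ i0 \<le> 1" using vsum[OF that] by simp
    qed
    have cont: "continuous_on {0<..} (\<lambda>t. v t $ i0)"
      by (intro continuous_intros vcont)
    show ?thesis by (rule limit_from_levels[OF cont bnd finB lev])
  qed
  then obtain l where l: "\<And>i. ((\<lambda>t. v t $ i) \<longlongrightarrow> l i) (at_right 0)" by metis
  have "(v \<longlongrightarrow> (\<chi> i. l i)) (at_right 0)"
    by (rule vec_tendstoI) (simp add: l)
  moreover have "v = (\<lambda>\<tau>. perron_vec (shifted_prod M K \<tau>))" by (simp add: fun_eq_iff v_def A_def)
  ultimately show ?thesis by blast
qed


end
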